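(* Let $\mu<0$. There exist constants $C_1,C_2>0$ such that for $\nu^{(\mu)}$-almost every tree $T$ there is $r_0(T)\in\mathbb N$ with $$1\le|D_r(T)|\le C_1\ln r\quad\text{and}\quad r\le|B_r(T)|\le C_2\,r\ln r\qquad\text{for all }r\ge r_0(T).$$
   Context: Rooted planar trees; $|D_r(T)|$ = number of vertices at height $r$; $|B_r(T)|=\sum_{s=1}^r|D_s(T)|$. With $k=e^{-\mu}$, $g_c=k/(1+k)^2$, $X(g)=(1-\sqrt{1-4g})/2$, $\nu^{(\mu)}$ is the Borel probability measure on the space of rooted planar trees (weak limit of $\nu_N^{(\mu)}(T)=e^{-\mu h(T)}/Z_N^{(\mu)}$ on trees with $N$ edges) characterized by $\nu^{(\mu)}(\{T:B_r(T)=T_0\})=K k^{r-1}g_c^{|T_0|-K}X(g_c)^{K-1}$ for each finite $T_0$ of height $r$ with $K$ vertices at height $r$ and $|T_0|$ edges. *)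

theory Defs
  imports "HOL-Probability.Probability"
begin

text \<open>Rooted planar trees (possibly infinite) in Ulam--Harris encoding: a vertex is a
  word of natural numbers, the root is the empty word, the children of w are w@[0], w@[1], ... Following the paper's conventions
  (planted trees), the root has exactly one child, namely [0].\<close>

definition rooted_planar_tree :: "nat list set \<Rightarrow> bool" where
  "rooted_planar_tree T \<longleftrightarrow>
     [] \<in> T \<and>
     (\<forall>w\<in>T. w \<noteq> [] \<longrightarrow> butlast w \<in> T) \<and>
     (\<forall>w i. w @ [Suc i] \<in> T \<longrightarrow> w @ [i] \<in> T) \<and>
     [0] \<in> T \<and> [1] \<notin> T"

definition D :: "nat \<Rightarrow> nat list set \<Rightarrow> nat list set" where
  "D r T = {w \<in> T. length w = r}"

definition ball_tree :: "nat \<Rightarrow> nat list set \<Rightarrow> nat list set" where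
  "ball_tree r T = {w \<in> T. length w \<le> r}"

definition Bsize :: "nat \<Rightarrow> nat list set \<Rightarrow> nat" where
  "Bsize r T = (\<Sum>s=1..r. card (D s T))"

definition finite_tree_of_height :: "nat \<Rightarrow> nat list set \<Rightarrow> bool" where
  "finite_tree_of_height r T0 \<longleftrightarrow> rooted_planar_tree T0 \<and> finite T0 \<and>
     ball_tree r T0 = T0 \<and> D r T0 \<noteq> {}"

definition n_edges :: "nat list set \<Rightarrow> nat" where
  "n_edges T0 = card T0 - 1"

definition kpar :: "real \<Rightarrow> real" where
  "kpar \<mu> = exp (- \<mu>)"

definition gcrit :: "real \<Rightarrow> real" where
  "gcrit \<mu> = kpar \<mu> / (1 + kpar \<mu>)^2"

definition Xfun :: "real \<Rightarrow> real" where
  "Xfun g = (1 - sqrt (1 - 4 * g)) / 2"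

text \<open>M is the measure nu^(mu): a probability measure on the space of rooted planar trees
  whose cylinder sets {T. B_r(T) = T0} are measurable with the prescribed probabilities
  (this characterizes nu^(mu) on the sigma-algebra generated by the cylinders).\<close>
definition is_nu_measure :: "real \<Rightarrow> nat list set measure \<Rightarrow> bool" where
  "is_nu_measure \<mu> M \<longleftrightarrow>
     prob_space M \<and> space M = {T. rooted_planar_tree T} \<and>
     (\<forall>r T0. finite_tree_of_height r T0 \<longrightarrow>
        (let K = card (D r T0); cyl = {T \<in> space M. ball_tree r T = T0} in
          cyl \<in> sets M \<and>
          measure M cyl = real K * kpar \<mu> ^ (r - 1) * gcrit \<mu> ^ (n_edges T0 - K)
                            * Xfun (gcrit \<mu>) ^ (K - 1)))"

end

theory Submission
  imports Defs
begin


lemma down_closed: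
  assumes "rooted_planar_tree T" "w @ [i] \<in> T" "j \<le> i" shows "w @ [j] \<in> T"
  using assms(2,3)
proof (induction i)
  case 0 thus ?case by simp
next
  case (Suc i)
  show ?case proof (cases "j = Suc i")
    case True thus ?thesis using Suc by simp
  next
    case False
    have "w@[i] \<in> T" using Suc.prems assms(1) unfolding rooted_planar_tree_def by blast
    thus ?thesis using Suc False by simp
  qed
qed

definition FT :: "nat \<Rightarrow> nat list set set" where "FT r = {T0. finite_tree_of_height r T0}"

definition NEW :: "nat \<Rightarrow> nat list set \<Rightarrow> (nat list \<Rightarrow> nat) \<Rightarrow> nat list set" where
  "NEW r T0 c = {w @ [j] | w j. w \<in> D r T0 \<and> j < c w}"

definition ext :: "nat \<Rightarrow> nat list set \<Rightarrow> (nat list \<Rightarrow> nat) \<Rightarrow> nat list set" where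
  "ext r T0 c = T0 \<union> NEW r T0 c"

definition SUPP :: "nat list set \<Rightarrow> (nat list \<Rightarrow> nat) set" where
  "SUPP A = {c. \<forall>x. x \<notin> A \<longrightarrow> c x = 0}"

definition EXT :: "nat \<Rightarrow> nat list set \<Rightarrow> (nat list \<Rightarrow> nat) set" where
  "EXT r T0 = {c \<in> SUPP (D r T0). 1 \<le> sum c (D r T0)}"

definition fib :: "nat \<Rightarrow> nat list set \<Rightarrow> nat list set set" where
  "fib r T0 = {T1 \<in> FT (Suc r). ball_tree r T1 = T0}"

lemma FT_D:
  assumes "T0 \<in> FT r"
  shows "rooted_planar_tree T0" "finite T0" "\<And>v. v \<in> T0 \<Longrightarrow> length v \<le> r" "D r T0 \<noteq> {}"
    "r \<ge> 1" "finite (D r T0)" "ball_tree r T0 = T0"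
proof -
  show rt: "rooted_planar_tree T0" "finite T0" "D r T0 \<noteq> {}" "ball_tree r T0 = T0"
    using assms by (auto simp: FT_def finite_tree_of_height_def)
  show len: "\<And>v. v \<in> T0 \<Longrightarrow> length v \<le> r"
  proof -
    fix v assume "v \<in> T0"
    hence "v \<in> ball_tree r T0" using rt by simp
    thus "length v \<le> r" by (simp add: ball_tree_def)
  qed
  have "[0] \<in> T0" using rt unfolding rooted_planar_tree_def by blast
  from len[OF this] show "r \<ge> 1" by simp
  show "finite (D r T0)" using rt by (simp add: D_def)
qed

lemma NEW_len: "v \<in> NEW r T0 c \<Longrightarrow> length v = Suc r"
  by (auto simp: NEW_def D_def)

lemma NEW_mem: "w \<in> D r T0 \<Longrightarrow> (w @ [j] \<in> NEW r T0 c) \<longleftrightarrow> j < c w"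
  by (auto simp: NEW_def)

lemma NEW_image: "NEW r T0 c = (\<lambda>(w,j). w @ [j]) ` (SIGMA w:D r T0. {..<c w})"
  by (auto simp: NEW_def)

lemma NEW_card:
  assumes "finite (D r T0)"
  shows "finite (NEW r T0 c)" "card (NEW r T0 c) = sum c (D r T0)"
proof -
  have inj: "inj_on (\<lambda>(w,j). w @ [j]) (SIGMA w:D r T0. {..<c w})"
    by (auto simp: inj_on_def)
  show "finite (NEW r T0 c)" unfolding NEW_image using assms by auto
  have "card (NEW r T0 c) = card (SIGMA w:D r T0. {..<c w})"
    unfolding NEW_image using card_image[OF inj] .
  also have "\<dots> = sum c (D r T0)" using assms by (simp)
  finally show "card (NEW r T0 c) = sum c (D r T0)" .
qed

lemma ext_props:
  assumes T0: "T0 \<in> FT r" and c: "c \<in> EXT r T0"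
  shows "ext r T0 c \<in> fib r T0"
    "D (Suc r) (ext r T0 c) = NEW r T0 c"
    "card (D (Suc r) (ext r T0 c)) = sum c (D r T0)"
    "n_edges (ext r T0 c) = n_edges T0 + sum c (D r T0)"
proof -
  note F = FT_D[OF T0]
  have nT: "v \<notin> T0" if "v \<in> NEW r T0 c" for v
    using F(3)[of v] NEW_len[OF that] by auto
  have disj: "T0 \<inter> NEW r T0 c = {}" using nT by blast
  show DN: "D (Suc r) (ext r T0 c) = NEW r T0 c"
  proof (intro equalityI subsetI)
    fix v assume "v \<in> D (Suc r) (ext r T0 c)"
    hence "v \<in> T0 \<union> NEW r T0 c" "length v = Suc r" by (auto simp: D_def ext_def)
    thus "v \<in> NEW r T0 c" using F(3)[of v] by auto
  next
    fix v assume "v \<in> NEW r T0 c"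
    thus "v \<in> D (Suc r) (ext r T0 c)" using NEW_len[of v] by (auto simp: D_def ext_def)
  qed
  show "card (D (Suc r) (ext r T0 c)) = sum c (D r T0)" using DN NEW_card F(6) by simp
  have "card (ext r T0 c) = card T0 + sum c (D r T0)"
    unfolding ext_def using card_Un_disjoint[OF F(2) NEW_card(1)[OF F(6)] disj] NEW_card(2)[OF F(6)] by simp
  moreover have "card T0 \<ge> 1"
  proof -
    have "T0 \<noteq> {}" using F(1) by (auto simp: rooted_planar_tree_def)
    thus ?thesis using F(2) by (simp add: Suc_le_eq card_gt_0_iff)
  qed
  ultimately show "n_edges (ext r T0 c) = n_edges T0 + sum c (D r T0)" by (simp add: n_edges_def)
  have rt: "rooted_planar_tree (ext r T0 c)"
    unfolding rooted_planar_tree_def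
  proof (intro conjI allI ballI impI)
    show "[] \<in> ext r T0 c" using F(1) by (simp add: ext_def rooted_planar_tree_def)
    show "[0] \<in> ext r T0 c" using F(1) by (simp add: ext_def rooted_planar_tree_def)
    show "[1] \<notin> ext r T0 c" using F(1) F(5) NEW_len[of "[1]" r T0 c]
      by (auto simp: ext_def rooted_planar_tree_def)
    fix w assume "w \<in> ext r T0 c" "w \<noteq> []"
    thus "butlast w \<in> ext r T0 c" using F(1)
      by (auto simp: ext_def rooted_planar_tree_def NEW_def D_def)
  next
    fix w i assume h: "w @ [Suc i] \<in> ext r T0 c"
    show "w @ [i] \<in> ext r T0 c"
    proof (cases "w @ [Suc i] \<in> T0")
      case True thus ?thesis using F(1) by (simp add: ext_def rooted_planar_tree_def)
    next
      case False
      hence "w @ [Suc i] \<in> NEW r T0 c" using h by (simp add: ext_def)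
      then obtain v j where "w @ [Suc i] = v @ [j]" "v \<in> D r T0" "j < c v" by (auto simp: NEW_def)
      thus ?thesis by (auto simp: ext_def NEW_def)
    qed
  qed
  have fin: "finite (ext r T0 c)" using F(2) NEW_card(1)[OF F(6)] by (simp add: ext_def)
  have b1: "ball_tree (Suc r) (ext r T0 c) = ext r T0 c"
  proof -
    have "length v \<le> Suc r" if "v \<in> ext r T0 c" for v
      using that F(3)[of v] NEW_len[of v r T0 c] by (auto simp: ext_def)
    thus ?thesis by (auto simp: ball_tree_def)
  qed
  have "sum c (D r T0) \<ge> 1" using c by (simp add: EXT_def)
  then obtain w where w: "w \<in> D r T0" "c w > 0"
    by (metis not_one_le_zero neq0_conv sum.neutral)
  hence "w @ [0] \<in> NEW r T0 c" by (simp add: NEW_mem)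
  hence ne: "D (Suc r) (ext r T0 c) \<noteq> {}" using DN by auto
  have b0: "ball_tree r (ext r T0 c) = T0"
  proof -
    have "v \<in> T0" if "v \<in> ext r T0 c" "length v \<le> r" for v
      using that NEW_len[of v r T0 c] by (auto simp: ext_def)
    thus ?thesis using F(3) by (auto simp: ball_tree_def ext_def)
  qed
  show "ext r T0 c \<in> fib r T0"
    using rt fin b1 ne b0 by (simp add: fib_def FT_def finite_tree_of_height_def)
qed



lemma finite_down_nat:
  assumes "finite (S::nat set)" "\<And>i j. i \<in> S \<Longrightarrow> j \<le> i \<Longrightarrow> j \<in> S"
  shows "S = {..<card S}"
proof -
  obtain n where n: "n \<notin> S" using assms(1) by (meson ex_new_if_finite infinite_UNIV_nat)
  define m where "m = (LEAST n. n \<notin> S)"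
  have m1: "m \<notin> S" unfolding m_def by (rule LeastI[of _ n]) (rule n)
  have m2: "j < m \<Longrightarrow> j \<in> S" for j unfolding m_def using not_less_Least by blast
  have "S = {..<m}"
  proof (intro equalityI subsetI)
    fix j assume "j \<in> S"
    thus "j \<in> {..<m}" using m1 assms(2)[of j m] by (metis lessThan_iff not_le)
  qed (use m2 in auto)
  thus ?thesis by simp
qed

lemma ext_inj:
  assumes T0: "T0 \<in> FT r" and c: "c \<in> SUPP (D r T0)" and c': "c' \<in> SUPP (D r T0)"
    and eq: "ext r T0 c = ext r T0 c'"
  shows "c = c'"
proof
  fix w
  show "c w = c' w"
  proof (cases "w \<in> D r T0")
    case False thus ?thesis using c c' by (simp add: SUPP_def)
  next
    case True
    have nT: "w @ [j] \<notin> T0" for j using FT_D(3)[OF T0, of "w @ [j]"] True by (auto simp: D_def)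
    have "j < c w \<longleftrightarrow> j < c' w" for j
    proof -
      have "j < c w \<longleftrightarrow> w @ [j] \<in> ext r T0 c" using nT NEW_mem[OF True] by (simp add: ext_def)
      also have "\<dots> \<longleftrightarrow> w @ [j] \<in> ext r T0 c'" using eq by simp
      also have "\<dots> \<longleftrightarrow> j < c' w" using nT NEW_mem[OF True] by (simp add: ext_def)
      finally show ?thesis .
    qed
    thus ?thesis by (metis less_irrefl nat_neq_iff)
  qed
qed

lemma fib_ext:
  assumes T0: "T0 \<in> FT r" and T1: "T1 \<in> fib r T0"
  shows "\<exists>c \<in> EXT r T0. T1 = ext r T0 c"
proof -
  note F = FT_D[OF T0]
  have T1F: "T1 \<in> FT (Suc r)" and b: "ball_tree r T1 = T0" using T1 by (auto simp: fib_def)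
  note G = FT_D[OF T1F]
  define c where "c w = (if w \<in> D r T0 then card {j. w @ [j] \<in> T1} else 0)" for w
  have cS: "c \<in> SUPP (D r T0)" by (simp add: SUPP_def c_def)
  have T0sub: "T0 \<subseteq> T1" using b by (auto simp: ball_tree_def)
  have char: "w @ [j] \<in> T1 \<longleftrightarrow> j < c w" if w: "w \<in> D r T0" for w j
  proof -
    let ?S = "{j. w @ [j] \<in> T1}"
    have fin: "finite ?S"
      by (rule finite_vimageI[OF G(2), of "\<lambda>j. w @ [j]", simplified vimage_def]) (auto simp: inj_on_def)
    have "?S = {..<card ?S}"
      by (rule finite_down_nat[OF fin]) (use down_closed[OF G(1)] in blast)
    hence "w @ [j] \<in> T1 \<longleftrightarrow> j \<in> {..<card ?S}" by blast
    thus ?thesis using w by (simp add: c_def)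
  qed
  have decomp: "\<exists>u j. v = u @ [j] \<and> u \<in> D r T0 \<and> j < c u" if v: "v \<in> T1" "length v = Suc r" for v
  proof -
    have vne: "v \<noteq> []" using v by auto
    define u where "u = butlast v"
    have vu: "v = u @ [last v]" using vne by (simp add: u_def)
    have "u \<in> T1" using G(1) v vne by (simp add: u_def rooted_planar_tree_def)
    moreover have "length u = r" using v by (simp add: u_def)
    ultimately have "u \<in> T0" using b by (auto simp: ball_tree_def)
    hence uD: "u \<in> D r T0" using \<open>length u = r\<close> by (simp add: D_def)
    have "last v < c u" using char[OF uD, of "last v"] v vu by simp
    thus ?thesis using vu uD by blast
  qed
  have eq: "T1 = ext r T0 c"
  proof (intro equalityI subsetI)
    fix v assume v: "v \<in> T1"
    show "v \<in> ext r T0 c"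
    proof (cases "length v \<le> r")
      case True
      hence "v \<in> T0" using v b by (auto simp: ball_tree_def)
      thus ?thesis by (simp add: ext_def)
    next
      case False
      hence "length v = Suc r" using G(3)[OF v] by simp
      then obtain u j where "v = u @ [j]" "u \<in> D r T0" "j < c u" using decomp v by blast
      thus ?thesis by (simp add: ext_def NEW_mem)
    qed
  next
    fix v assume "v \<in> ext r T0 c"
    hence "v \<in> T0 \<or> v \<in> NEW r T0 c" by (simp add: ext_def)
    thus "v \<in> T1"
    proof
      assume "v \<in> T0" thus ?thesis using T0sub by blast
    next
      assume "v \<in> NEW r T0 c"
      then obtain w j where "v = w @ [j]" "w \<in> D r T0" "j < c w" by (auto simp: NEW_def)
      thus ?thesis using char by blast
    qed
  qed
  obtain v where v: "v \<in> D (Suc r) T1" using G(4) by blast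
  hence "v \<in> T1" "length v = Suc r" by (auto simp: D_def)
  then obtain u j where uj: "v = u @ [j]" "u \<in> D r T0" "j < c u" using decomp by blast
  have "1 \<le> c u" using uj by simp
  also have "c u \<le> sum c (D r T0)" using uj F(6) by (intro member_le_sum) auto
  finally have "c \<in> EXT r T0" using cS by (simp add: EXT_def)
  thus ?thesis using eq by blast
qed

lemma ext_bij:
  assumes T0: "T0 \<in> FT r"
  shows "bij_betw (ext r T0) (EXT r T0) (fib r T0)"
  unfolding bij_betw_def
proof
  show "inj_on (ext r T0) (EXT r T0)"
    by (rule inj_onI) (use ext_inj[OF T0] in \<open>auto simp: EXT_def\<close>)
  show "ext r T0 ` EXT r T0 = fib r T0"
    using ext_props(1)[OF T0] fib_ext[OF T0] by blast
qed

lemma ball_FT: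
  assumes T1: "T1 \<in> FT (Suc r)" and r: "r \<ge> 1"
  shows "ball_tree r T1 \<in> FT r"
proof -
  note G = FT_D[OF T1]
  let ?B = "ball_tree r T1"
  have rt: "rooted_planar_tree ?B"
    unfolding rooted_planar_tree_def
  proof (intro conjI allI ballI impI)
    show "[] \<in> ?B" using G(1) by (simp add: ball_tree_def rooted_planar_tree_def)
    show "[0] \<in> ?B" using G(1) r by (simp add: ball_tree_def rooted_planar_tree_def)
    show "[1] \<notin> ?B" using G(1) by (simp add: ball_tree_def rooted_planar_tree_def)
    fix w assume "w \<in> ?B" "w \<noteq> []"
    thus "butlast w \<in> ?B" using G(1) by (auto simp: ball_tree_def rooted_planar_tree_def)
  next
    fix w i assume "w @ [Suc i] \<in> ?B"
    thus "w @ [i] \<in> ?B" using G(1) by (auto simp: ball_tree_def rooted_planar_tree_def)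
  qed
  have fin: "finite ?B" using G(2) by (simp add: ball_tree_def)
  have bb: "ball_tree r ?B = ?B" by (auto simp: ball_tree_def)
  obtain v where v: "v \<in> T1" "length v = Suc r" using G(4) by (auto simp: D_def)
  have "butlast v \<in> T1" using v G(1) by (auto simp: rooted_planar_tree_def)
  hence "butlast v \<in> D r ?B" using v by (simp add: D_def ball_tree_def)
  hence "D r ?B \<noteq> {}" by blast
  thus ?thesis using rt fin bb by (simp add: FT_def finite_tree_of_height_def)
qed

lemma FT_countable: "countable (FT r)"
proof -
  have "FT r \<subseteq> Collect finite" by (auto simp: FT_def finite_tree_of_height_def)
  thus ?thesis using countable_Collect_finite countable_subset by blast
qed

lemma FT_1: "FT 1 = {{[], [0]}}"
proof (intro equalityI subsetI)
  fix T0 assume T0: "T0 \<in> FT 1"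
  note F = FT_D[OF T0]
  have "T0 \<subseteq> {[], [0]}"
  proof
    fix v assume v: "v \<in> T0"
    have "length v \<le> 1" using F(3)[OF v] .
    then consider "v = []" | i where "v = [i]" by (cases v) auto
    thus "v \<in> {[], [0]}"
    proof cases
      case 2
      show ?thesis
      proof (cases i)
        case (Suc j)
        have "[] @ [1] \<in> T0" using down_closed[OF F(1), of "[]" i 1] v 2 Suc by simp
        hence False using F(1) by (simp add: rooted_planar_tree_def)
        thus ?thesis ..
      qed (use 2 in simp)
    qed simp
  qed
  moreover have "{[], [0]} \<subseteq> T0" using F(1) by (simp add: rooted_planar_tree_def)
  ultimately show "T0 \<in> {{[], [0]}}" by blast
next
  fix T0 assume "T0 \<in> {{[], [0::nat]}}"
  hence T0: "T0 = {[], [0]}" by simp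
  have "rooted_planar_tree T0" unfolding T0 rooted_planar_tree_def by auto
  moreover have "ball_tree 1 T0 = T0" unfolding T0 by (auto simp: ball_tree_def)
  moreover have "[0] \<in> D 1 T0" unfolding T0 by (simp add: D_def)
  ultimately show "T0 \<in> FT 1" unfolding FT_def finite_tree_of_height_def T0 by auto
qed

lemma FT_1_vals: "card (D 1 {[], [0::nat]}) = 1" "n_edges {[], [0::nat]} = 1"
proof -
  have "D 1 {[], [0::nat]} = {[0]}" by (auto simp: D_def)
  thus "card (D 1 {[], [0::nat]}) = 1" by simp
  show "n_edges {[], [0::nat]} = 1" by (simp add: n_edges_def)
qed

lemma FT_nD: assumes "T0 \<in> FT r" shows "card (D r T0) \<le> n_edges T0" "card (D r T0) \<ge> 1"
proof -
  note F = FT_D[OF assms]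
  have "D r T0 \<subseteq> T0 - {[]}" using F(5) by (auto simp: D_def)
  hence "card (D r T0) \<le> card (T0 - {[]})" using F(2) by (intro card_mono) auto
  also have "\<dots> = n_edges T0" using F(1) by (simp add: n_edges_def rooted_planar_tree_def)
  finally show "card (D r T0) \<le> n_edges T0" .
  show "card (D r T0) \<ge> 1" using F(4) F(6) by (simp add: Suc_le_eq card_gt_0_iff)
qed



lemma params:
  assumes "\<mu> < 0"
  shows "kpar \<mu> > 1" "Xfun (gcrit \<mu>) = 1 / (1 + kpar \<mu>)"
proof -
  define k where "k = kpar \<mu>"
  show k1: "kpar \<mu> > 1" using assms by (simp add: kpar_def)
  hence k1': "k > 1" by (simp add: k_def)
  have d: "(1 + k)^2 > 0" using k1' by simp
  have gk: "gcrit \<mu> * (1 + k)^2 = k" using d by (simp add: gcrit_def k_def[symmetric])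
  have "(1 - 4 * gcrit \<mu>) * (1 + k)^2 = (1 + k)^2 - 4 * (gcrit \<mu> * (1 + k)^2)"
    by (simp add: algebra_simps)
  also have "\<dots> = (k - 1)^2" unfolding gk by (simp add: power2_eq_square algebra_simps)
  finally have "(1 - 4 * gcrit \<mu>) * (1 + k)^2 = (k - 1)^2" .
  hence "1 - 4 * gcrit \<mu> = (k - 1)^2 / (1 + k)^2" using d by (simp add: eq_divide_eq)
  hence "1 - 4 * gcrit \<mu> = ((k - 1) / (1 + k))^2" by (simp add: power_divide)
  hence "sqrt (1 - 4 * gcrit \<mu>) = (k - 1) / (1 + k)" using k1' by simp
  thus "Xfun (gcrit \<mu>) = 1 / (1 + kpar \<mu>)"
    using k1' by (simp add: Xfun_def k_def[symmetric] field_simps)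
qed

lemma params2:
  assumes "\<mu> < 0"
  defines "X \<equiv> Xfun (gcrit \<mu>)"
  shows "0 < X" "X < 1/2" "kpar \<mu> = (1 - X) / X" "gcrit \<mu> = X * (1 - X)"
proof -
  note p = params[OF assms(1)]
  define k where "k = kpar \<mu>"
  have k: "k > 1" "X = 1/(1+k)" using p by (auto simp: X_def k_def)
  show "0 < X" unfolding k(2) using k(1) by simp
  show "X < 1/2" unfolding k(2) using k(1) by (simp add: field_simps)
  show "kpar \<mu> = (1 - X) / X" unfolding k(2) k_def[symmetric] using k(1) by (simp add: field_simps)
  show "gcrit \<mu> = X * (1 - X)" unfolding k(2) gcrit_def k_def[symmetric] using k(1)
    by (simp add: field_simps power2_eq_square)
qed

lemma nn_geometric_mean:
  assumes "0 \<le> y" "y < 1"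
  shows "(\<integral>\<^sup>+n. ennreal (real n) \<partial>measure_pmf (geometric_pmf (1 - y))) = ennreal (y / (1 - y))"
proof -
  have p: "1 - y \<in> {0<..1}" using assms by auto
  have "(\<integral>\<^sup>+n. ennreal (real n) \<partial>measure_pmf (geometric_pmf (1 - y)))
        = ennreal (measure_pmf.expectation (geometric_pmf (1 - y)) real)"
    by (rule nn_integral_eq_integral[OF integrable_real_geometric_pmf[OF p]]) auto
  also have "\<dots> = ennreal (y / (1 - y))" using expectation_geometric_pmf[OF p] by simp
  finally show ?thesis .
qed

lemma sum_geom_supp:
  fixes A :: "'a set"
  assumes A: "finite A" and y: "0 \<le> y" "y < 1"
  shows "(\<integral>\<^sup>+c. ennreal (real (sum c A) * y ^ sum c A) \<partial>count_space {c. \<forall>x. x \<notin> A \<longrightarrow> c x = 0})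
         = ennreal (real (card A) * y / (1 - y) ^ (card A + 1))"
proof -
  define P where "P = Pi_pmf A 0 (\<lambda>_. geometric_pmf (1 - y))"
  define S where "S = {c::'a\<Rightarrow>nat. \<forall>x. x \<notin> A \<longrightarrow> c x = 0}"
  define L where "L = (\<integral>\<^sup>+c. ennreal (real (sum c A) * y ^ sum c A) \<partial>count_space S)"
  have pmfP: "pmf P c = indicator S c * ((1 - y) ^ card A * y ^ sum c A)" for c
  proof -
    have pg: "pmf (geometric_pmf (1 - y)) n = y ^ n * (1 - y)" for n
      using pmf_geometric[of "1 - y" n] y by simp
    have "(\<Prod>x\<in>A. pmf (geometric_pmf (1 - y)) (c x)) = (1 - y) ^ card A * y ^ sum c A"
      by (simp add: pg prod.distrib power_sum mult.commute)
    thus ?thesis by (simp add: P_def pmf_Pi[OF A] S_def indicator_def)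
  qed
  have "(\<integral>\<^sup>+c. ennreal (real (sum c A)) \<partial>measure_pmf P)
      = (\<integral>\<^sup>+c. ennreal (pmf P c) * ennreal (real (sum c A)) \<partial>count_space UNIV)"
    by (rule nn_integral_measure_pmf)
  also have "\<dots> = (\<integral>\<^sup>+c. ennreal ((1 - y) ^ card A) * (ennreal (real (sum c A) * y ^ sum c A) * indicator S c) \<partial>count_space UNIV)"
  proof (intro nn_integral_cong)
    fix c
    have n1: "0 \<le> (1 - y) ^ card A" "0 \<le> y ^ sum c A" using y by auto
    show "ennreal (pmf P c) * ennreal (real (sum c A)) = ennreal ((1 - y) ^ card A) * (ennreal (real (sum c A) * y ^ sum c A) * indicator S c)"
    proof (cases "c \<in> S")
      case True
      have "ennreal (pmf P c) * ennreal (real (sum c A)) = ennreal ((1 - y) ^ card A * y ^ sum c A * real (sum c A))"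
        using True n1 by (simp add: pmfP ennreal_mult')
      also have "\<dots> = ennreal ((1 - y) ^ card A) * ennreal (real (sum c A) * y ^ sum c A)"
        using n1 by (subst ennreal_mult'[symmetric]) (simp_all add: mult_ac)
      finally show ?thesis using True by simp
    qed (simp add: pmfP)
  qed
  also have "\<dots> = ennreal ((1 - y) ^ card A) * L"
    by (subst nn_integral_cmult) (auto simp: L_def nn_integral_count_space_indicator)
  finally have e1: "(\<integral>\<^sup>+c. ennreal (real (sum c A)) \<partial>measure_pmf P) = ennreal ((1 - y) ^ card A) * L" .
  have "(\<integral>\<^sup>+c. ennreal (real (sum c A)) \<partial>measure_pmf P) = (\<integral>\<^sup>+c. (\<Sum>a\<in>A. ennreal (real (c a))) \<partial>measure_pmf P)"
    by (intro nn_integral_cong) (simp add: sum_ennreal[symmetric] del: sum_ennreal)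
  also have "\<dots> = (\<Sum>a\<in>A. \<integral>\<^sup>+c. ennreal (real (c a)) \<partial>measure_pmf P)"
    by (rule nn_integral_sum) auto
  also have "\<dots> = (\<Sum>a\<in>A. ennreal (y / (1 - y)))"
  proof (rule sum.cong[OF refl])
    fix a assume a: "a \<in> A"
    have "(\<integral>\<^sup>+c. ennreal (real (c a)) \<partial>measure_pmf P) = (\<integral>\<^sup>+n. ennreal (real n) \<partial>measure_pmf (map_pmf (\<lambda>c. c a) P))"
      by simp
    also have "map_pmf (\<lambda>c. c a) P = geometric_pmf (1 - y)"
      using Pi_pmf_component[OF A, of a 0 "\<lambda>_. geometric_pmf (1 - y)"] a by (simp add: P_def)
    finally show "(\<integral>\<^sup>+c. ennreal (real (c a)) \<partial>measure_pmf P) = ennreal (y / (1 - y))"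
      using nn_geometric_mean[OF y] by simp
  qed
  also have "\<dots> = ennreal (real (card A) * (y / (1 - y)))"
    by (simp add: ennreal_of_nat_eq_real_of_nat ennreal_mult' del: times_divide_eq_right)
  finally have e2: "ennreal ((1 - y) ^ card A) * L = ennreal (real (card A) * (y / (1 - y)))" using e1 by simp
  have pos: "0 < (1 - y) ^ card A" using y by simp
  have "L = ennreal (1 / (1 - y) ^ card A) * (ennreal ((1 - y) ^ card A) * L)"
    using pos y by (simp add: mult.assoc[symmetric] ennreal_mult''[symmetric])
  also have "\<dots> = ennreal (1 / (1 - y) ^ card A * (real (card A) * (y / (1 - y))))"
    using e2 pos y by (simp add: ennreal_mult''[symmetric])
  also have "1 / (1 - y) ^ card A * (real (card A) * (y / (1 - y))) = real (card A) * y / (1 - y) ^ (card A + 1)"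
    using y by (simp add: field_simps)
  finally show ?thesis by (simp add: L_def S_def)
qed



definition wt :: "real \<Rightarrow> nat \<Rightarrow> nat list set \<Rightarrow> real" where
  "wt \<mu> r T0 = real (card (D r T0)) * kpar \<mu> ^ (r - 1) * gcrit \<mu> ^ (n_edges T0 - card (D r T0))
                * Xfun (gcrit \<mu>) ^ (card (D r T0) - 1)"

lemma ratid:
  fixes X b XR BK a AR XN AN XK AK K s :: real
  assumes "X \<noteq> 0" "b \<noteq> 0" "XR \<noteq> 0" "BK \<noteq> 0"
  shows "(a * AR / (X * XR)) * (XN * AN * X * XK * a * AK) / X * (K * (X * s) / (b * b * BK))
       = K * (AR / XR) * (XN * AN) * XK * (s * (a * a * AK / (b * b * BK)))"
  using assms by (simp add: field_simps)

lemma alg1: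
  fixes X s :: real
  assumes X: "0 < X" "X < 1" and K: "K \<ge> 1" "n \<ge> K" and r: "r \<ge> 1" and s: "0 \<le> s" "X * s < 1"
  shows "((1 - X)/X)^r * (X * (1 - X))^n / X * (real K * (X * s) / (1 - X * s)^(K+1))
       = real K * ((1 - X)/X)^(r-1) * (X * (1 - X))^(n-K) * X^(K-1) * (s * ((1 - X)/(1 - X * s))^(K+1))"
proof -
  obtain r' where r': "r = Suc r'" using r by (cases r) auto
  obtain K' where K': "K = Suc K'" using K by (cases K) auto
  obtain n' where n': "n = n' + K" using K by (metis le_add_diff_inverse2)
  have xs: "1 - X * s \<noteq> 0" using s by simp
  have e1: "((1 - X)/X)^r = (1 - X) * (1 - X)^r' / (X * X^r')" using r' by (simp add: power_divide)
  have e2: "(X * (1 - X))^n = X^n' * (1 - X)^n' * X * X^K' * (1 - X) * (1 - X)^K'"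
    using n' K' by (simp add: power_add power_mult_distrib mult_ac)
  have e3: "(1 - X * s)^(K+1) = (1 - X * s) * (1 - X * s) * (1 - X * s)^K'" using K' by simp
  have e4: "((1 - X)/X)^(r-1) = (1 - X)^r' / X^r'" using r' by (simp add: power_divide)
  have e5: "(X * (1 - X))^(n-K) = X^n' * (1 - X)^n'" using n' by (simp add: power_mult_distrib)
  have e6: "X^(K-1) = X^K'" using K' by simp
  have e7: "((1 - X)/(1 - X * s))^(K+1) = (1 - X) * (1 - X) * (1 - X)^K' / ((1 - X * s) * (1 - X * s) * (1 - X * s)^K')"
    using K' by (simp add: power_divide mult.assoc)
  show ?thesis unfolding e1 e2 e3 e4 e5 e6 e7
    by (rule ratid) (use X xs in auto)
qed

lemma alg2:
  fixes X s :: real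
  assumes X: "0 < X" and K: "K' \<ge> 1"
  shows "real K' * k ^ (Suc r - 1) * g ^ ((n + K') - K') * X ^ (K' - 1) * s ^ K'
       = k^r * g^n / X * (real K' * (X * s)^K')"
proof -
  obtain K where K': "K' = Suc K" using K by (cases K') auto
  show ?thesis using X by (simp add: K' power_mult_distrib field_simps)
qed

lemma step_lemma:
  assumes mu: "\<mu> < 0" and r: "r \<ge> 1" and s: "0 \<le> s" "Xfun (gcrit \<mu>) * s < 1"
  shows "(\<integral>\<^sup>+T1. ennreal (wt \<mu> (Suc r) T1 * s ^ card (D (Suc r) T1)) \<partial>count_space (FT (Suc r))) =
         (\<integral>\<^sup>+T0. ennreal (wt \<mu> r T0 * (s * ((1 - Xfun (gcrit \<mu>)) / (1 - Xfun (gcrit \<mu>) * s)) ^ (card (D r T0) + 1))) \<partial>count_space (FT r))"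
proof -
  define X where "X = Xfun (gcrit \<mu>)"
  note P = params2[OF mu, folded X_def]
  have X1: "X < 1" using P by simp
  define k where "k = kpar \<mu>"
  define g where "g = gcrit \<mu>"
  have kX: "k = (1 - X)/X" "g = X * (1 - X)" using P by (simp_all add: k_def g_def)
  define f1 where "f1 T1 = ennreal (wt \<mu> (Suc r) T1 * s ^ card (D (Suc r) T1))" for T1
  have "(\<integral>\<^sup>+T1. f1 T1 \<partial>count_space (FT (Suc r)))
      = (\<integral>\<^sup>+T1. (\<integral>\<^sup>+T0. f1 T1 * indicator {ball_tree r T1} T0 \<partial>count_space (FT r)) \<partial>count_space (FT (Suc r)))"
  proof (intro nn_integral_cong)
    fix T1 assume "T1 \<in> space (count_space (FT (Suc r)))"
    hence b: "ball_tree r T1 \<in> FT r" using ball_FT r by simp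
    show "f1 T1 = (\<integral>\<^sup>+T0. f1 T1 * indicator {ball_tree r T1} T0 \<partial>count_space (FT r))"
      by (subst nn_integral_count_space'[where A="{ball_tree r T1}"]) (use b in auto)
  qed
  also have "\<dots> = (\<integral>\<^sup>+T0. (\<integral>\<^sup>+T1. f1 T1 * indicator {ball_tree r T1} T0 \<partial>count_space (FT (Suc r))) \<partial>count_space (FT r))"
    by (rule nn_integral_count_space_nn_integral[OF FT_countable]) simp
  also have "\<dots> = (\<integral>\<^sup>+T0. (\<integral>\<^sup>+T1. f1 T1 \<partial>count_space (fib r T0)) \<partial>count_space (FT r))"
    by (intro nn_integral_cong) (auto simp: nn_integral_count_space_indicator fib_def indicator_def intro!: nn_integral_cong)
  also have "\<dots> = (\<integral>\<^sup>+T0. (\<integral>\<^sup>+c. f1 (ext r T0 c) \<partial>count_space (EXT r T0)) \<partial>count_space (FT r))"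
    by (intro nn_integral_cong) (simp add: nn_integral_bij_count_space[OF ext_bij])
  also have "\<dots> = (\<integral>\<^sup>+T0. ennreal (wt \<mu> r T0 * (s * ((1 - X) / (1 - X * s)) ^ (card (D r T0) + 1))) \<partial>count_space (FT r))"
  proof (intro nn_integral_cong)
    fix T0 assume "T0 \<in> space (count_space (FT r))"
    hence T0: "T0 \<in> FT r" by simp
    define K where "K = card (D r T0)"
    define n where "n = n_edges T0"
    have KN: "K \<ge> 1" "n \<ge> K" using FT_nD[OF T0] by (simp_all add: K_def n_def)
    define C where "C = k^r * g^n / X"
    have C0: "C \<ge> 0" using P by (simp add: C_def kX)
    define h where "h c = ennreal C * ennreal (real (sum c (D r T0)) * (X * s) ^ sum c (D r T0))" for c
    have "(\<integral>\<^sup>+c. f1 (ext r T0 c) \<partial>count_space (EXT r T0)) = (\<integral>\<^sup>+c. h c \<partial>count_space (EXT r T0))"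
    proof (intro nn_integral_cong)
      fix c assume "c \<in> space (count_space (EXT r T0))"
      hence c: "c \<in> EXT r T0" by simp
      define K' where "K' = sum c (D r T0)"
      have K'1: "K' \<ge> 1" using c by (simp add: EXT_def K'_def)
      have "wt \<mu> (Suc r) (ext r T0 c) * s ^ card (D (Suc r) (ext r T0 c))
          = real K' * k ^ (Suc r - 1) * g ^ ((n + K') - K') * X ^ (K' - 1) * s ^ K'"
        unfolding wt_def using ext_props(3,4)[OF T0 c] by (simp add: K'_def n_def k_def g_def X_def)
      also have "\<dots> = C * (real K' * (X * s) ^ K')" unfolding C_def by (rule alg2[OF P(1) K'1])
      finally show "f1 (ext r T0 c) = h c" using C0 by (simp add: f1_def h_def K'_def ennreal_mult')
    qed
    also have "\<dots> = (\<integral>\<^sup>+c. h c \<partial>count_space (SUPP (D r T0)))"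
    proof (rule nn_integral_count_space_eq)
      fix c assume "c \<in> SUPP (D r T0) - EXT r T0"
      hence "sum c (D r T0) = 0" by (auto simp: EXT_def)
      thus "h c = 0" by (simp add: h_def)
    next
      fix c assume "c \<in> EXT r T0 - SUPP (D r T0)"
      hence False by (auto simp: EXT_def)
      thus "h c = 0" ..
    qed
    also have "\<dots> = ennreal C * (\<integral>\<^sup>+c. ennreal (real (sum c (D r T0)) * (X * s) ^ sum c (D r T0)) \<partial>count_space (SUPP (D r T0)))"
      unfolding h_def by (rule nn_integral_cmult) simp
    also have "\<dots> = ennreal C * ennreal (real K * (X * s) / (1 - X * s) ^ (K + 1))"
    proof -
      have y: "0 \<le> X * s" "X * s < 1" using P(1) s by (auto simp: X_def)
      show ?thesis unfolding SUPP_def K_def by (simp only: sum_geom_supp[OF FT_D(6)[OF T0] y])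
    qed
    also have "\<dots> = ennreal (C * (real K * (X * s) / (1 - X * s) ^ (K + 1)))" using C0 by (rule ennreal_mult'[symmetric])
    also have "C * (real K * (X * s) / (1 - X * s) ^ (K + 1)) = wt \<mu> r T0 * (s * ((1 - X) / (1 - X * s)) ^ (card (D r T0) + 1))"
    proof -
      have wtT: "wt \<mu> r T0 = real K * ((1 - X)/X)^(r-1) * (X * (1 - X))^(n-K) * X^(K-1)"
        apply (simp only: wt_def X_def[symmetric])
        apply (simp only: k_def[symmetric] g_def[symmetric] K_def[symmetric] n_def[symmetric] kX)
        done
      show ?thesis unfolding wtT C_def kX K_def[symmetric]
        by (rule alg1[OF P(1) X1 KN r s[folded X_def]])
    qed
    finally show "(\<integral>\<^sup>+c. f1 (ext r T0 c) \<partial>count_space (EXT r T0)) = ennreal (wt \<mu> r T0 * (s * ((1 - X) / (1 - X * s)) ^ (card (D r T0) + 1)))" .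
  qed
  finally show ?thesis by (simp add: f1_def X_def)
qed



definition W :: "real \<Rightarrow> nat \<Rightarrow> real \<Rightarrow> ennreal" where
  "W \<mu> r s = (\<integral>\<^sup>+T0. ennreal (wt \<mu> r T0 * s ^ card (D r T0)) \<partial>count_space (FT r))"

lemma wt_nonneg: assumes "\<mu> < 0" shows "wt \<mu> r T0 \<ge> 0"
proof -
  note P = params2[OF assms]
  have "kpar \<mu> \<ge> 0" by (simp add: kpar_def)
  moreover have "gcrit \<mu> \<ge> 0"
  proof -
    have "Xfun (gcrit \<mu>) * (1 - Xfun (gcrit \<mu>)) \<ge> 0" using P(1,2) by simp
    thus ?thesis by (simp only: P(4)[symmetric])
  qed
  moreover have "Xfun (gcrit \<mu>) \<ge> 0" using P(1) by simp
  ultimately show ?thesis by (simp add: wt_def)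
qed

lemma W1: assumes "0 \<le> s" shows "W \<mu> 1 s = ennreal s"
proof -
  have d: "D (Suc 0) {[], [0::nat]} = {[0]}" by (auto simp: D_def)
  have "wt \<mu> 1 {[], [0]} = 1" by (simp add: wt_def d n_edges_def)
  thus ?thesis unfolding W_def FT_1 using assms by (simp add: nn_integral_count_space_finite d)
qed

lemma W_one: assumes mu: "\<mu> < 0" and r: "r \<ge> 1" shows "W \<mu> r 1 = 1"
  using r
proof (induction r rule: dec_induct)
  case base thus ?case using W1[of 1] by simp
next
  case (step r)
  note P = params2[OF mu]
  have "W \<mu> (Suc r) 1 = (\<integral>\<^sup>+T0. ennreal (wt \<mu> r T0 * (1 * ((1 - Xfun (gcrit \<mu>)) / (1 - Xfun (gcrit \<mu>) * 1)) ^ (card (D r T0) + 1))) \<partial>count_space (FT r))"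
    unfolding W_def by (rule step_lemma[OF mu step.hyps(1)]) (use P(1,2) in auto)
  also have "\<dots> = W \<mu> r 1" unfolding W_def using P(1,2) by (intro nn_integral_cong) simp
  finally show ?case using step.IH by simp
qed

lemma lyap:
  fixes X :: real
  assumes X: "0 < X" "X < 1/2"
  defines "lam \<equiv> 1 / (2 * X)" and "q \<equiv> 2 * (1 - X)"
  shows "\<exists>b\<ge>0. \<forall>K. lam * q ^ (K + 1) \<le> lam ^ K / 2 + b"
proof -
  define \<rho> where "\<rho> = q / lam"
  have lam0: "lam > 0" using X by (simp add: lam_def)
  have q1: "q \<ge> 1" using X by (simp add: q_def)
  have rho: "\<rho> = 4 * X * (1 - X)" using X by (simp add: \<rho>_def q_def lam_def field_simps)
  have rho0: "0 \<le> \<rho>" "\<rho> < 1"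
  proof -
    show "0 \<le> \<rho>" using X rho by simp
    have "0 < (2 * X - 1)^2" using X by simp
    thus "\<rho> < 1" unfolding rho by (simp add: power2_eq_square algebra_simps)
  qed
  have "(\<lambda>n. \<rho> ^ n) \<longlonglongrightarrow> 0" using rho0 by (intro LIMSEQ_power_zero) auto
  hence "eventually (\<lambda>n. \<rho> ^ n < 1 / (2 * (lam * q))) sequentially"
    using lam0 q1 by (intro order_tendstoD) auto
  then obtain K0 where K0: "\<And>n. n \<ge> K0 \<Longrightarrow> \<rho> ^ n < 1 / (2 * (lam * q))"
    by (auto simp: eventually_sequentially)
  define b where "b = lam * q ^ (K0 + 1)"
  have b0: "b \<ge> 0" using lam0 q1 by (simp add: b_def)
  have "lam * q ^ (K + 1) \<le> lam ^ K / 2 + b" for K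
  proof (cases "K \<ge> K0")
    case True
    have lq: "lam * q > 0" using lam0 q1 by simp
    have eq: "lam * q ^ (K + 1) = (lam * q) * \<rho> ^ K * lam ^ K"
      using lam0 by (simp add: \<rho>_def power_divide field_simps)
    have "(lam * q) * \<rho> ^ K \<le> (lam * q) * (1 / (2 * (lam * q)))"
      using K0[OF True] lq by (intro mult_left_mono) auto
    also have "\<dots> = 1 / 2" using lam0 q1 by simp
    finally have "lam * q ^ (K + 1) \<le> 1 / 2 * lam ^ K"
      unfolding eq using lam0 by (intro mult_right_mono) auto
    thus ?thesis using b0 by simp
  next
    case False
    have "q ^ (K + 1) \<le> q ^ (K0 + 1)" using False q1 by (intro power_increasing) auto
    hence "lam * q ^ (K + 1) \<le> b" unfolding b_def using lam0 by simp
    moreover have "lam ^ K \<ge> 0" using lam0 by simp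
    ultimately show ?thesis by simp
  qed
  thus ?thesis using b0 by blast
qed



lemma V_bound:
  assumes mu: "\<mu> < 0"
  defines "lam \<equiv> 1 / (2 * Xfun (gcrit \<mu>))"
  shows "\<exists>Vb. \<forall>r\<ge>1. W \<mu> r lam \<le> ennreal Vb"
proof -
  define X where "X = Xfun (gcrit \<mu>)"
  note P = params2[OF mu, folded X_def]
  define q where "q = 2 * (1 - X)"
  have lamX: "lam = 1 / (2 * X)" by (simp add: lam_def X_def)
  obtain b where b: "b \<ge> 0" "\<And>K. lam * q ^ (K + 1) \<le> lam ^ K / 2 + b"
    using lyap[OF P(1,2)] unfolding lamX q_def by blast
  have lam0: "lam > 0" using P(1) by (simp add: lamX)
  define Vb where "Vb = max lam (2 * b)"
  have "W \<mu> r lam \<le> ennreal Vb" if r: "r \<ge> 1" for r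
    using r
  proof (induction r rule: dec_induct)
    case base
    show ?case using W1[of lam \<mu>] lam0 by (simp add: Vb_def)
  next
    case (step r)
    have Xl: "X * lam = 1/2" using P(1) by (simp add: lamX)
    have phi: "(1 - X) / (1 - X * lam) = q" unfolding Xl q_def by simp
    have "W \<mu> (Suc r) lam = (\<integral>\<^sup>+T0. ennreal (wt \<mu> r T0 * (lam * ((1 - X) / (1 - X * lam)) ^ (card (D r T0) + 1))) \<partial>count_space (FT r))"
      unfolding W_def X_def by (rule step_lemma[OF mu step.hyps(1)]) (use lam0 Xl in \<open>auto simp: X_def\<close>)
    also have "\<dots> \<le> (\<integral>\<^sup>+T0. ennreal (1/2) * ennreal (wt \<mu> r T0 * lam ^ card (D r T0)) + ennreal b * ennreal (wt \<mu> r T0 * 1 ^ card (D r T0)) \<partial>count_space (FT r))"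
    proof (intro nn_integral_mono)
      fix T0
      define K where "K = card (D r T0)"
      have w0: "wt \<mu> r T0 \<ge> 0" by (rule wt_nonneg[OF mu])
      have "wt \<mu> r T0 * (lam * q ^ (K + 1)) \<le> wt \<mu> r T0 * (lam ^ K / 2 + b)"
        using b(2)[of K] w0 by (intro mult_left_mono) auto
      also have "\<dots> = 1/2 * (wt \<mu> r T0 * lam ^ K) + b * (wt \<mu> r T0 * 1 ^ K)" by (simp add: algebra_simps)
      finally have ineq: "wt \<mu> r T0 * (lam * q ^ (K + 1)) \<le> 1/2 * (wt \<mu> r T0 * lam ^ K) + b * (wt \<mu> r T0 * 1 ^ K)" .
      have "ennreal (wt \<mu> r T0 * (lam * q ^ (K + 1))) \<le> ennreal (1/2 * (wt \<mu> r T0 * lam ^ K) + b * (wt \<mu> r T0 * 1 ^ K))"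
        using ineq by (rule ennreal_leI)
      also have "\<dots> = ennreal (1/2) * ennreal (wt \<mu> r T0 * lam ^ K) + ennreal b * ennreal (wt \<mu> r T0 * 1 ^ K)"
      proof -
        have n1: "0 \<le> 1/2 * (wt \<mu> r T0 * lam ^ K)" "0 \<le> b * (wt \<mu> r T0 * 1 ^ K)" using w0 lam0 b(1) by auto
        have e1: "ennreal (1/2 * (wt \<mu> r T0 * lam ^ K)) = ennreal (1/2) * ennreal (wt \<mu> r T0 * lam ^ K)"
          by (rule ennreal_mult') simp
        have e2: "ennreal (b * (wt \<mu> r T0 * 1 ^ K)) = ennreal b * ennreal (wt \<mu> r T0 * 1 ^ K)"
          by (rule ennreal_mult'[OF b(1)])
        show ?thesis unfolding ennreal_plus[OF n1] e1 e2 ..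
      qed
      finally show "ennreal (wt \<mu> r T0 * (lam * ((1 - X) / (1 - X * lam)) ^ (card (D r T0) + 1)))
          \<le> ennreal (1/2) * ennreal (wt \<mu> r T0 * lam ^ card (D r T0)) + ennreal b * ennreal (wt \<mu> r T0 * 1 ^ card (D r T0))"
        unfolding phi K_def .
    qed
    also have "\<dots> = ennreal (1/2) * W \<mu> r lam + ennreal b * W \<mu> r 1"
      unfolding W_def by (simp add: nn_integral_add nn_integral_cmult)
    also have "\<dots> = ennreal (1/2) * W \<mu> r lam + ennreal b" using W_one[OF mu step.hyps(1)] by simp
    also have "\<dots> \<le> ennreal (1/2) * ennreal Vb + ennreal b"
      using step.IH by (intro add_mono mult_left_mono) auto
    also have "\<dots> = ennreal (Vb / 2 + b)"
    proof -
      have v0: "Vb \<ge> 0" using lam0 by (simp add: Vb_def)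
      have "ennreal (1/2) * ennreal Vb = ennreal (1/2 * Vb)" by (rule ennreal_mult'[symmetric]) simp
      thus ?thesis using v0 b(1) by (simp add: ennreal_plus)
    qed
    also have "\<dots> \<le> ennreal Vb" by (intro ennreal_leI) (simp add: Vb_def)
    finally show ?case .
  qed
  thus ?thesis by blast
qed



lemma final_pt:
  fixes C1 :: real
  assumes C1: "C1 > 0" and inG: "\<And>r. r \<ge> 1 \<Longrightarrow> ball_tree r T \<in> FT r"
    and ev: "\<And>r. r \<ge> r1 \<Longrightarrow> \<not> (C1 * ln (real r) < real (card (D r (ball_tree r T))))"
  shows "\<exists>r0::nat. \<forall>r\<ge>r0.
        1 \<le> card (D r T) \<and> real (card (D r T)) \<le> C1 * ln (real r) \<and>
        r \<le> Bsize r T \<and> real (Bsize r T) \<le> C1 * real r * ln (real r)"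
proof -
  have D_eq: "D r (ball_tree r T) = D r T" for r by (auto simp: D_def ball_tree_def)
  define r2 where "r2 = max r1 1"
  have lower: "1 \<le> card (D r T)" if "r \<ge> 1" for r using FT_nD(2)[OF inG[OF that]] D_eq by simp
  have upper: "real (card (D r T)) \<le> C1 * ln (real r)" if "r \<ge> r2" for r
    using ev[of r] that D_eq by (simp add: r2_def not_less)
  define A where "A = (\<Sum>s<r2. real (card (D s T)))"
  define r0 where "r0 = max r2 (nat \<lceil>exp (A / C1)\<rceil>)"
  have "1 \<le> card (D r T) \<and> real (card (D r T)) \<le> C1 * ln (real r) \<and>
        r \<le> Bsize r T \<and> real (Bsize r T) \<le> C1 * real r * ln (real r)" if r: "r \<ge> r0" for r
  proof -
    have r1': "r \<ge> r2" "r \<ge> 1" using r by (auto simp: r0_def r2_def)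
    have "nat \<lceil>exp (A / C1)\<rceil> \<le> r" using r by (simp add: r0_def)
    hence "exp (A / C1) \<le> real r" by (simp add: nat_le_iff ceiling_le_iff)
    hence "A / C1 \<le> ln (real r)" using r1' by (subst ln_ge_iff) auto
    hence Aln: "A \<le> C1 * ln (real r)" using C1 by (simp add: field_simps)
    have each: "real (card (D s T)) \<le> C1 * ln (real r)" if s: "s \<in> {1..r}" for s
    proof (cases "s \<ge> r2")
      case True
      have "real (card (D s T)) \<le> C1 * ln (real s)" by (rule upper[OF True])
      also have "\<dots> \<le> C1 * ln (real r)" using s C1 by (intro mult_left_mono) auto
      finally show ?thesis .
    next
      case False
      have "real (card (D s T)) \<le> A" unfolding A_def
        by (rule member_le_sum) (use False in auto)
      thus ?thesis using Aln by simp
    qed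
    have "real (Bsize r T) = (\<Sum>s=1..r. real (card (D s T)))" by (simp add: Bsize_def)
    also have "\<dots> \<le> of_nat (card {1..r}) * (C1 * ln (real r))" by (rule sum_bounded_above) (rule each)
    finally have ub: "real (Bsize r T) \<le> C1 * real r * ln (real r)" by (simp add: mult_ac)
    have "of_nat (card {1..r}) * 1 \<le> (\<Sum>s=1..r. card (D s T))"
      by (rule sum_bounded_below) (use lower in auto)
    hence lb: "r \<le> Bsize r T" by (simp add: Bsize_def)
    show ?thesis using lower[OF r1'(2)] upper[OF r1'(1)] ub lb by simp
  qed
  thus ?thesis by blast
qed



theorem mainTheorem10:
  fixes \<mu> :: real and M :: "nat list set measure"
  assumes "\<mu> < 0" and "is_nu_measure \<mu> M"
  shows "\<exists>C1 C2. C1 > 0 \<and> C2 > 0 \<and>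
    (AE T in M. \<exists>r0::nat. \<forall>r\<ge>r0.
        1 \<le> card (D r T) \<and> real (card (D r T)) \<le> C1 * ln (real r) \<and>
        r \<le> Bsize r T \<and> real (Bsize r T) \<le> C2 * real r * ln (real r))"
proof -
  note mu = assms(1)
  define X where "X = Xfun (gcrit \<mu>)"
  note P = params2[OF mu, folded X_def]
  define lam where "lam = 1 / (2 * X)"
  obtain Vb0 where Vb0: "\<And>r. r \<ge> 1 \<Longrightarrow> W \<mu> r lam \<le> ennreal Vb0"
    using V_bound[OF mu] unfolding lam_def X_def by blast
  define Vb where "Vb = max Vb0 0"
  have Vb: "\<And>r. r \<ge> 1 \<Longrightarrow> W \<mu> r lam \<le> ennreal Vb" "Vb \<ge> 0"
    using Vb0 order_trans[OF _ ennreal_leI[of Vb0 Vb]] by (auto simp: Vb_def)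
  have lam1: "lam > 1" using P(1,2) by (simp add: lam_def field_simps)
  define C1 where "C1 = 2 / ln lam"
  have C1: "C1 > 0" using lam1 by (simp add: C1_def)
  have ps: "prob_space M" and sp: "space M = {T. rooted_planar_tree T}"
    and cylP: "\<And>r T0. T0 \<in> FT r \<Longrightarrow> {T \<in> space M. ball_tree r T = T0} \<in> sets M \<and>
                 measure M {T \<in> space M. ball_tree r T = T0} = wt \<mu> r T0"
    using assms(2) unfolding is_nu_measure_def FT_def wt_def Let_def by auto
  interpret prob_space M by (rule ps)
  define cyl where "cyl r T0 = {T \<in> space M. ball_tree r T = T0}" for r T0
  have cylS: "cyl r T0 \<in> sets M" if "T0 \<in> FT r" for r T0 using cylP[OF that] by (simp add: cyl_def)
  have cylE: "emeasure M (cyl r T0) = ennreal (wt \<mu> r T0)" if "T0 \<in> FT r" for r T0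
    using cylP[OF that] by (simp add: cyl_def emeasure_eq_measure)
  have disj: "disjoint_family_on (cyl r) A" for r A
    unfolding disjoint_family_on_def cyl_def by auto
  define G where "G r = (\<Union>T0\<in>FT r. cyl r T0)" for r
  have GS: "G r \<in> sets M" for r unfolding G_def
    by (rule sets.countable_UN''[OF FT_countable]) (rule cylS)
  have GE: "emeasure M (G r) = 1" if r: "r \<ge> 1" for r
  proof -
    have "emeasure M (G r) = (\<integral>\<^sup>+T0. emeasure M (cyl r T0) \<partial>count_space (FT r))"
      unfolding G_def by (rule emeasure_UN_countable[OF cylS FT_countable disj])
    also have "\<dots> = W \<mu> r 1" unfolding W_def by (intro nn_integral_cong) (simp add: cylE)
    also have "\<dots> = 1" by (rule W_one[OF mu r])
    finally show ?thesis .
  qed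
  have AEG: "AE T in M. \<forall>r. r \<ge> 1 \<longrightarrow> T \<in> G r"
  proof (subst AE_all_countable, intro allI)
    fix r :: nat
    show "AE T in M. r \<ge> 1 \<longrightarrow> T \<in> G r"
    proof (cases "r \<ge> 1")
      case True
      have "prob (G r) = 1" using GE[OF True] by (simp add: measure_def)
      hence "AE T in M. T \<in> G r" using AE_in_set_eq_1[OF GS] by simp
      thus ?thesis by (rule eventually_mono) simp
    qed simp
  qed
  define Bs where "Bs r = {T0 \<in> FT r. C1 * ln (real r) < real (card (D r T0))}" for r
  define B where "B r = (\<Union>T0\<in>Bs r. cyl r T0)" for r
  have Bsc: "countable (Bs r)" for r using FT_countable countable_subset[of "Bs r" "FT r"] by (auto simp: Bs_def)
  have BS: "B r \<in> sets M" for r unfolding B_def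
    by (rule sets.countable_UN''[OF Bsc]) (rule cylS, simp add: Bs_def)
  have BE: "measure M (B r) \<le> Vb * inverse (real r ^ 2)" if r: "r \<ge> 1" for r
  proof -
    have rpos: "real r > 0" using r by simp
    have key: "ennreal (wt \<mu> r T0) * indicator (Bs r) T0
        \<le> ennreal (inverse (real r ^ 2)) * (ennreal (wt \<mu> r T0 * lam ^ card (D r T0)) * indicator (FT r) T0)" for T0
    proof (cases "T0 \<in> Bs r")
      case True
      hence T0: "T0 \<in> FT r" and K: "C1 * ln (real r) < real (card (D r T0))" by (auto simp: Bs_def)
      have l2: "ln (real r ^ 2) = 2 * ln (real r)" using rpos by (simp add: ln_realpow)
      have "real r ^ 2 = exp (ln (real r ^ 2))" using rpos by simp
      also have "\<dots> = exp (2 * ln (real r))" by (simp only: l2)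
      also have "\<dots> = lam powr (C1 * ln (real r))" using lam1 by (simp add: powr_def C1_def)
      also have "\<dots> < lam powr real (card (D r T0))" by (rule powr_less_mono[OF K lam1])
      also have "\<dots> = lam ^ card (D r T0)" using lam1 by (simp add: powr_realpow)
      finally have lt: "real r ^ 2 < lam ^ card (D r T0)" .
      have w0: "wt \<mu> r T0 \<ge> 0" by (rule wt_nonneg[OF mu])
      have "wt \<mu> r T0 = inverse (real r ^ 2) * (wt \<mu> r T0 * real r ^ 2)" using rpos by simp
      also have "\<dots> \<le> inverse (real r ^ 2) * (wt \<mu> r T0 * lam ^ card (D r T0))"
        using lt w0 rpos by (intro mult_left_mono) auto
      finally have "ennreal (wt \<mu> r T0) \<le> ennreal (inverse (real r ^ 2) * (wt \<mu> r T0 * lam ^ card (D r T0)))"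
        by (rule ennreal_leI)
      also have "\<dots> = ennreal (inverse (real r ^ 2)) * ennreal (wt \<mu> r T0 * lam ^ card (D r T0))"
        by (rule ennreal_mult') simp
      finally show ?thesis using True T0 by simp
    qed simp
    have "emeasure M (B r) = (\<integral>\<^sup>+T0. emeasure M (cyl r T0) \<partial>count_space (Bs r))"
      unfolding B_def by (rule emeasure_UN_countable[OF cylS Bsc disj]) (simp add: Bs_def)
    also have "\<dots> = (\<integral>\<^sup>+T0. ennreal (wt \<mu> r T0) \<partial>count_space (Bs r))"
      by (intro nn_integral_cong) (auto simp: cylE Bs_def)
    also have "\<dots> = (\<integral>\<^sup>+T0. ennreal (wt \<mu> r T0) * indicator (Bs r) T0 \<partial>count_space UNIV)"
      by (simp add: nn_integral_count_space_indicator)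
    also have "\<dots> \<le> (\<integral>\<^sup>+T0. ennreal (inverse (real r ^ 2)) * (ennreal (wt \<mu> r T0 * lam ^ card (D r T0)) * indicator (FT r) T0) \<partial>count_space UNIV)"
      by (rule nn_integral_mono) (rule key)
    also have "\<dots> = ennreal (inverse (real r ^ 2)) * W \<mu> r lam"
      by (subst nn_integral_cmult) (simp_all add: W_def nn_integral_count_space_indicator)
    also have "\<dots> \<le> ennreal (inverse (real r ^ 2)) * ennreal Vb"
      by (intro mult_left_mono Vb(1)[OF r]) simp
    also have "\<dots> = ennreal (Vb * inverse (real r ^ 2))" using ennreal_mult'[OF Vb(2), of "inverse (real r ^ 2)"] by (simp add: mult.commute)
    finally have "ennreal (measure M (B r)) \<le> ennreal (Vb * inverse (real r ^ 2))"
      by (simp add: emeasure_eq_measure)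
    thus ?thesis using Vb(2) by (simp add: ennreal_le_iff)
  qed
  have summ: "summable (\<lambda>r. measure M (B r))"
  proof (rule summable_comparison_test'[where N=1])
    show "summable (\<lambda>r. Vb * inverse (real r ^ 2))"
      by (intro summable_mult inverse_power_summable) simp
    fix r :: nat assume "r \<ge> 1"
    thus "norm (measure M (B r)) \<le> Vb * inverse (real r ^ 2)" using BE by simp
  qed
  have AEB: "AE T in M. eventually (\<lambda>r. T \<in> space M - B r) sequentially"
    by (rule borel_cantelli_AE1[OF BS _ summ]) (simp add: less_top[symmetric])
  have "AE T in M. \<exists>r0::nat. \<forall>r\<ge>r0.
        1 \<le> card (D r T) \<and> real (card (D r T)) \<le> C1 * ln (real r) \<and>
        r \<le> Bsize r T \<and> real (Bsize r T) \<le> C1 * real r * ln (real r)"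
    using AEG AEB AE_space
  proof eventually_elim
    case (elim T)
    have inG: "ball_tree r T \<in> FT r" if "r \<ge> 1" for r
    proof -
      have "T \<in> G r" using elim(1) that by simp
      then obtain T0 where "T0 \<in> FT r" "T \<in> cyl r T0" by (auto simp: G_def)
      thus ?thesis by (simp add: cyl_def)
    qed
    obtain r1 where r1: "\<And>r. r \<ge> r1 \<Longrightarrow> T \<in> space M - B r"
      using elim(2) by (auto simp: eventually_sequentially)
    define r1' where "r1' = max r1 1"
    have ev: "\<not> (C1 * ln (real r) < real (card (D r (ball_tree r T))))" if "r \<ge> r1'" for r
    proof
      assume lt: "C1 * ln (real r) < real (card (D r (ball_tree r T)))"
      have "ball_tree r T \<in> Bs r" using lt inG[of r] that by (simp add: Bs_def r1'_def)
      moreover have "T \<in> cyl r (ball_tree r T)" using elim(3) by (simp add: cyl_def)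
      ultimately have "T \<in> B r" by (auto simp: B_def)
      thus False using r1[of r] that by (simp add: r1'_def)
    qed
    show ?case by (rule final_pt[OF C1 inG ev])
  qed
  thus ?thesis using C1 by blast
qed


end
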